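(* Let $F\in\mathbb{R}[x,y,t,s]$ be square-free, with no factor depending only on $(t,s)$, and such that the leading coefficient of $F$ with respect to $y$ does not depend on $x$. Let $M(x,t,s)=\sqrt{D_y(F)}$ and $R(t,s)=D_x(M)$, and assume $R$ is not identically zero. Let $t_0\in\mathbb{R}$ be such that $t-t_0$ is not a factor of $R(t,s)$. Then: (i) $\mathrm{Res}_x(M,M_x)$ specializes well at $t=t_0$, i.e. $\mathrm{Res}_x(M,M_x)(t_0,s)=\mathrm{Res}_x\big(M(x,t_0,s),M_x(x,t_0,s)\big)$, where $M_x=\partial M/\partial x$; (ii) $M(x,t_0,s)$ is square-free as a polynomial in the variable $x$. The analogous statements hold for $s_0\in\mathbb{R}$ such that $s-s_0$ is not a factor of $R(t,s)$, with the specialization $s=s_0$.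
   Context: For a polynomial $G$ and a variable $w$, $D_w(G):=\mathrm{Res}_w(G,\partial G/\partial w)$, and $\sqrt{G}$ denotes the square-free part of $G$. By convention $M:=0$ if $\deg_y F=0$ and $R:=0$ if $\deg_x M=0$. *)

theory Defs
  imports "Subresultants.Resultant_Prelim" "HOL-Computational_Algebra.Computational_Algebra" "HOL-Computational_Algebra.Field_as_Ring"
begin

text \<open>Multivariate polynomials are modelled as iterated univariate polynomials.
  Variable order (innermost first): s, t, x, y.
  So  real poly                    = R[s]
      real poly poly               = R[s][t]   ~ R[t,s]
      real poly poly poly          = R[s][t][x] ~ R[x,t,s]
      real poly poly poly poly     = R[s][t][x][y] ~ R[x,y,t,s]\<close>

definition D :: "'a::{comm_ring_1,semiring_no_zero_divisors} poly \<Rightarrow> 'a" where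
  "D G = resultant G (pderiv G)"

definition sqfree_part :: "'a::{factorial_semiring,normalization_semidom_multiplicative} \<Rightarrow> 'a" where
  "sqfree_part G = (if G = 0 then 0 else \<Prod>p\<in>prime_factors G. p)"

text \<open>M(x,t,s) = sqrt(D_y F), with M := 0 if deg_y F = 0.\<close>
definition M_of :: "real poly poly poly poly \<Rightarrow> real poly poly poly" where
  "M_of F = (if degree F = 0 then 0 else sqfree_part (D F))"

definition R_of :: "real poly poly poly \<Rightarrow> real poly poly" where
  "R_of M = (if degree M = 0 then 0 else D M)"

text \<open>Specialisation t := t0 of an element of R[s][t] (gives element of R[s]).\<close>
definition eval_t :: "real \<Rightarrow> real poly poly \<Rightarrow> real poly" where
  "eval_t t0 c = poly c [:t0:]"

text \<open>Specialisation s := s0 of an element of R[s][t] (gives element of R[t]).\<close>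
definition eval_s :: "real \<Rightarrow> real poly poly \<Rightarrow> real poly" where
  "eval_s s0 c = map_poly (\<lambda>a. poly a s0) c"

definition sqfree_in_x :: "'a::comm_semiring_1 poly \<Rightarrow> bool" where
  "sqfree_in_x P \<longleftrightarrow> P \<noteq> 0 \<and> (\<forall>g. degree g > 0 \<longrightarrow> \<not> (g ^ 2 dvd P))"

end

theory Submission
  imports Defs "Subresultants.Subresultant_Gcd"
begin


lemma det_col_zero:
  assumes A: "A \<in> carrier_mat n n" and k: "k < n" and z: "\<And>i. i < n \<Longrightarrow> A $$ (i,k) = 0"
  shows "det A = 0"
proof -
  have "(\<Prod> i = 0 ..< n. A $$ (i, p i)) = 0" if p: "p permutes {0 ..< n}" for p
  proof -
    have "inv_into UNIV p k \<in> {0..<n}" using k p by (simp add: permutes_in_image permutes_inv)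
    moreover have "p (inv_into UNIV p k) = k" using p by (meson permutes_inverses(1))
    ultimately show ?thesis using z by (intro prod_zero) (auto intro!: bexI[of _ "inv_into UNIV p k"])
  qed
  thus ?thesis unfolding det_def'[OF A] by simp
qed

lemma key:
  fixes M :: "real poly poly poly" and h :: "real poly poly \<Rightarrow> real poly"
  assumes hom: "idom_hom h" and deg: "degree M > 0" and nz: "h (resultant M (pderiv M)) \<noteq> 0"
  shows "h (resultant M (pderiv M)) = resultant (map_poly h M) (map_poly h (pderiv M))
         \<and> sqfree_in_x (map_poly h M)"
proof -
  interpret idom_hom h by fact
  define m where "m = degree M"
  have dp: "degree (pderiv M) = m - 1" by (simp add: degree_pderiv m_def)
  have lcp: "coeff (pderiv M) (m - 1) = of_nat m * lead_coeff M"
    using deg by (simp add: coeff_pderiv m_def)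
  have lc: "h (lead_coeff M) \<noteq> 0"
  proof
    assume h0: "h (lead_coeff M) = 0"
    let ?S = "sylvester_mat M (pderiv M)"
    have "h (resultant M (pderiv M)) = det (map_mat h ?S)" by (simp add: resultant_def)
    also have "\<dots> = 0"
    proof (rule det_col_zero[of _ "m + (m - 1)" 0])
      show "map_mat h ?S \<in> carrier_mat (m + (m - 1)) (m + (m - 1))"
        using sylvester_carrier_mat[of M "pderiv M"] by (simp add: dp m_def)
      show "0 < m + (m - 1)" using deg m_def by simp
      fix i assume i: "i < m + (m - 1)"
      have "?S $$ (i,0) = (if i < m - 1 then
         if i \<le> 0 \<and> 0 - i \<le> m then coeff M (m + i - 0) else 0
        else if i - (m - 1) \<le> 0 \<and> 0 \<le> i then coeff (pderiv M) (i - 0) else 0)"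
        using sylvester_index_mat[of i M "pderiv M" 0] i deg by (simp add: dp m_def)
      moreover have "h (coeff (pderiv M) (m - 1)) = 0" using lcp h0 by (simp add: hom_distribs)
      ultimately show "map_mat h ?S $$ (i,0) = 0" using i h0 deg
        by (cases "i = degree M - 1") (auto simp: dp m_def)
    qed
    finally show False using nz by simp
  qed
  have Mnz: "M \<noteq> 0" using deg by auto
  have d1: "degree (map_poly h M) = degree M"
    by (rule Ring_Hom_Poly.degree_map_poly) (use lc Mnz in auto)
  have "h (lead_coeff (pderiv M)) = of_nat m * h (lead_coeff M)"
    using lcp dp by (simp add: hom_distribs)
  hence lc2: "h (lead_coeff (pderiv M)) \<noteq> 0" using lc deg m_def by simp
  hence pnz: "pderiv M \<noteq> 0" by auto
  have d2: "degree (map_poly h (pderiv M)) = degree (pderiv M)"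
    by (rule Ring_Hom_Poly.degree_map_poly) (use lc2 pnz in auto)
  have res: "h (resultant M (pderiv M)) = resultant (map_poly h M) (map_poly h (pderiv M))"
    using resultant_map_poly[OF d1 d2] by simp
  have sq: "sqfree_in_x (map_poly h M)"
    unfolding sqfree_in_x_def
  proof (intro conjI allI impI notI)
    show M0: "map_poly h M = 0 \<Longrightarrow> False" using d1 deg by auto
    fix g :: "real poly poly" assume dg: "0 < degree g" and gd: "g ^ 2 dvd map_poly h M"
    then obtain k where k: "map_poly h M = g ^ 2 * k" by (auto elim: dvdE)
    have "pderiv (map_poly h M) = g * (g * pderiv k + k * (2 * pderiv g))"
      unfolding k pderiv_mult by (simp add: pderiv_power_Suc power2_eq_square pderiv_mult algebra_simps)
    hence gp: "g dvd map_poly h (pderiv M)" by (simp add: map_poly_pderiv)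
    have gM: "g dvd map_poly h M" using k by (simp add: power2_eq_square)
    have "g dvd gcd (map_poly h M) (map_poly h (pderiv M))" using gp gM by simp
    moreover have "gcd (map_poly h M) (map_poly h (pderiv M)) \<noteq> 0" using d1 deg by auto
    ultimately have "degree g \<le> degree (gcd (map_poly h M) (map_poly h (pderiv M)))"
      by (rule dvd_imp_degree_le)
    hence "resultant (map_poly h M) (map_poly h (pderiv M)) = 0"
      using dg by (subst resultant_0_gcd) linarith
    thus False using res nz by simp
  qed
  show ?thesis using res sq by simp
qed


theorem lemma11:
  fixes F :: "real poly poly poly poly"
  assumes sqf: "squarefree F"
    and no_ts_factor: "\<forall>g :: real poly poly. [:[:g:]:] dvd F \<longrightarrow> is_unit g"
    and lc: "degree (lead_coeff F) = 0"
    and Rnz: "R_of (M_of F) \<noteq> 0"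
  shows "(\<forall>t0::real. \<not> ([:[:-t0:], 1:] dvd R_of (M_of F)) \<longrightarrow>
            eval_t t0 (resultant (M_of F) (pderiv (M_of F)))
              = resultant (map_poly (eval_t t0) (M_of F)) (map_poly (eval_t t0) (pderiv (M_of F)))
            \<and> sqfree_in_x (map_poly (eval_t t0) (M_of F)))
       \<and> (\<forall>s0::real. \<not> ([:[:-s0, 1:]:] dvd R_of (M_of F)) \<longrightarrow>
            eval_s s0 (resultant (M_of F) (pderiv (M_of F)))
              = resultant (map_poly (eval_s s0) (M_of F)) (map_poly (eval_s s0) (pderiv (M_of F)))
            \<and> sqfree_in_x (map_poly (eval_s s0) (M_of F)))"
proof -
  define M where "M = M_of F"
  have deg: "degree M > 0" and R: "R_of M = resultant M (pderiv M)"
    using Rnz unfolding M_def[symmetric] R_of_def D_def by (auto split: if_splits)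
  show ?thesis unfolding M_def[symmetric]
  proof (intro conjI allI impI)
    fix t0 :: real assume nd: "\<not> [:[:-t0:], 1:] dvd R_of M"
    have hom: "idom_hom (eval_t t0)" unfolding eval_t_def by (rule poly_hom.idom_hom_axioms)
    have "eval_t t0 (resultant M (pderiv M)) \<noteq> 0"
      using nd unfolding R eval_t_def poly_eq_0_iff_dvd by simp
    from key[OF hom deg this] show "eval_t t0 (resultant M (pderiv M))
              = resultant (map_poly (eval_t t0) M) (map_poly (eval_t t0) (pderiv M))"
      "sqfree_in_x (map_poly (eval_t t0) M)" by auto
  next
    fix s0 :: real assume nd: "\<not> [:[:-s0, 1:]:] dvd R_of M"
    interpret mh: map_poly_idom_hom "\<lambda>a::real poly. poly a s0" ..
    have hom: "idom_hom (eval_s s0)" unfolding eval_s_def by (rule mh.idom_hom_axioms)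
    have "eval_s s0 (resultant M (pderiv M)) \<noteq> 0"
    proof
      assume z: "eval_s s0 (resultant M (pderiv M)) = 0"
      have "[:-s0, 1:] dvd coeff (resultant M (pderiv M)) n" for n
      proof -
        have "coeff (eval_s s0 (resultant M (pderiv M))) n = 0" using z by simp
        thus ?thesis unfolding eval_s_def by (simp add: poly_eq_0_iff_dvd)
      qed
      hence "[:[:-s0, 1:]:] dvd resultant M (pderiv M)" by (simp add: const_poly_dvd_iff)
      thus False using nd R by simp
    qed
    from key[OF hom deg this] show "eval_s s0 (resultant M (pderiv M))
              = resultant (map_poly (eval_s s0) M) (map_poly (eval_s s0) (pderiv M))"
      "sqfree_in_x (map_poly (eval_s s0) M)" by auto
  qed
qed

end
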